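(* Let $n\ge2$ and let $g:\mathcal{D}_n\to\mathbb{R}$ be jointly Lebesgue measurable. Consider the conditions: (D1) for every $\mathbf{R}\in[0,\infty)^n\setminus\{\mathbf{0}\}$, $\boldsymbol{\pi}\mapsto g(\boldsymbol{\pi},\mathbf{R})$ is concave on $\mathcal{D}_n(\cdot\mid\mathbf{R})$; (D2) $g(\boldsymbol{\pi},\mathbf{R})=0$ whenever $\mathbf{R}$ is constant on $\supp(\boldsymbol{\pi})$; (D3) $g(\boldsymbol{\pi},\alpha\mathbf{R})=g(\boldsymbol{\pi},\mathbf{R})$ for all $(\boldsymbol{\pi},\mathbf{R})\in\mathcal{D}_n$ and $\alpha>0$; (D4) there exist a Lebesgue measurable map $\mathbf{a}:[0,\infty)^n\setminus\{\mathbf{0}\}\to\mathbb{R}^n$ and a Lebesgue measurable $b:(0,\infty)\to\mathbb{R}$ such that for every $m\in(0,\infty)$ and $\mathbf{R}\in[0,\infty)^n\setminus\{\mathbf{0}\}$, $g(\boldsymbol{\pi},\mathbf{R})=\langle\mathbf{a}(\mathbf{R}),\boldsymbol{\pi}\rangle+b(m)$ for all $\boldsymbol{\pi}\in C_{m,\mathbf{R}}$, where $C_{m,\mathbf{R}}=\{\boldsymbol{\pi}\in\mathcal{D}_n(\cdot\mid\mathbf{R}):\langle\boldsymbol{\pi},\mathbf{R}\rangle=m\}$. Then: (i) $g$ is a gap function with a Lebesgue measurable generator if and only if $g$ satisfies (D2) and (D4); in that case, its generator is concave if and only if (D1) holds. (ii) $g$ satisfies (D2), (D3) and (D4) if and only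 if $g=c\,\Gamma$ for some $c\in\mathbb{R}$; in that case, $c\ge0$ if and only if (D1) holds.
   Context: $\Delta_n=\{\mathbf{x}\in[0,1]^n:\sum_ix_i=1\}$; $\supp(\mathbf{x})=\{i:x_i>0\}$; $\mathcal{D}_n=\{(\boldsymbol{\pi},\mathbf{R})\in\Delta_n\times[0,\infty)^n:\supp(\boldsymbol{\pi})\subseteq\supp(\mathbf{R})\}$; for $\mathbf{R}\in[0,\infty)^n\setminus\{\mathbf{0}\}$, $\mathcal{D}_n(\cdot\mid\mathbf{R})=\{\boldsymbol{\pi}\in\Delta_n:(\boldsymbol{\pi},\mathbf{R})\in\mathcal{D}_n\}$. A function $g:\mathcal{D}_n\to\mathbb{R}$ is a gap function with generator $\varphi:(0,\infty)\to\mathbb{R}$ if $g(\boldsymbol{\pi},\mathbf{R})=\varphi\big(\sum_{i\in\supp(\boldsymbol{\pi})}\pi_iR_i\big)-\sum_{i\in\supp(\boldsymbol{\pi})}\pi_i\varphi(R_i)$ for all $(\boldsymbol{\pi},\mathbf{R})\in\mathcal{D}_n$. The excess growth rate $\Gamma$ is the gap function with generator $\varphi=\log$. *)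

theory Defs
  imports "HOL-Analysis.Analysis"
begin

text \<open>Vectors in R^n are modelled as real^'n with the finite index type 'n (n = CARD('n)).\<close>

definition supp_vec :: "real ^ 'n \<Rightarrow> 'n set" where
  "supp_vec x = {i. x $ i > 0}"

definition prob_simplex :: "(real ^ 'n) set" where
  "prob_simplex = {x. (\<forall>i. 0 \<le> x $ i \<and> x $ i \<le> 1) \<and> (\<Sum>i\<in>UNIV. x $ i) = 1}"

definition Dn :: "((real ^ 'n) \<times> (real ^ 'n)) set" where
  "Dn = {(p, R). p \<in> prob_simplex \<and> (\<forall>i. 0 \<le> R $ i) \<and> supp_vec p \<subseteq> supp_vec R}"

definition Rset :: "(real ^ 'n) set" where
  "Rset = {R. (\<forall>i. 0 \<le> R $ i) \<and> R \<noteq> 0}"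

definition Dcond :: "real ^ 'n \<Rightarrow> (real ^ 'n) set" where
  "Dcond R = {p. (p, R) \<in> Dn}"

definition is_gap_function :: "(real ^ 'n \<Rightarrow> real ^ 'n \<Rightarrow> real) \<Rightarrow> (real \<Rightarrow> real) \<Rightarrow> bool" where
  "is_gap_function g \<phi> \<longleftrightarrow>
     (\<forall>(p, R) \<in> Dn. g p R = \<phi> (\<Sum>i\<in>supp_vec p. p $ i * R $ i) - (\<Sum>i\<in>supp_vec p. p $ i * \<phi> (R $ i)))"

definition Gamma :: "real ^ 'n \<Rightarrow> real ^ 'n \<Rightarrow> real" where
  "Gamma p R = ln (\<Sum>i\<in>supp_vec p. p $ i * R $ i) - (\<Sum>i\<in>supp_vec p. p $ i * ln (R $ i))"

definition D1 :: "(real ^ 'n \<Rightarrow> real ^ 'n \<Rightarrow> real) \<Rightarrow> bool" where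
  "D1 g \<longleftrightarrow> (\<forall>R \<in> Rset. concave_on (Dcond R) (\<lambda>p. g p R))"

definition D2 :: "(real ^ 'n \<Rightarrow> real ^ 'n \<Rightarrow> real) \<Rightarrow> bool" where
  "D2 g \<longleftrightarrow> (\<forall>(p, R) \<in> Dn. (\<forall>i\<in>supp_vec p. \<forall>j\<in>supp_vec p. R $ i = R $ j) \<longrightarrow> g p R = 0)"

definition D3 :: "(real ^ 'n \<Rightarrow> real ^ 'n \<Rightarrow> real) \<Rightarrow> bool" where
  "D3 g \<longleftrightarrow> (\<forall>(p, R) \<in> Dn. \<forall>\<alpha>::real. \<alpha> > 0 \<longrightarrow> g p (\<alpha> *\<^sub>R R) = g p R)"

definition Cset :: "real \<Rightarrow> real ^ 'n \<Rightarrow> (real ^ 'n) set" where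
  "Cset m R = {p \<in> Dcond R. p \<bullet> R = m}"

definition D4 :: "(real ^ 'n \<Rightarrow> real ^ 'n \<Rightarrow> real) \<Rightarrow> bool" where
  "D4 g \<longleftrightarrow> (\<exists>(a :: real ^ 'n \<Rightarrow> real ^ 'n) (b :: real \<Rightarrow> real).
      a \<in> borel_measurable (lebesgue_on Rset) \<and>
      b \<in> borel_measurable (lebesgue_on {0<..}) \<and>
      (\<forall>m > 0. \<forall>R \<in> Rset. \<forall>p \<in> Cset m R. g p R = a R \<bullet> p + b m))"

end

theory Submission
  imports Defs
begin


lemma meas_lt_aux: "A \<in> fmeasurable M \<Longrightarrow> emeasure M A < ennreal r \<Longrightarrow> measure M A < r"
  by (metis Sigma_Algebra.measure_def enn2real_less_iff fmeasurableD2 top.not_eq_extremum)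

lemma steinhaus_real:
  fixes E :: "real set"
  assumes E: "E \<in> sets lebesgue" and bE: "bounded E" and pos: "measure lebesgue E > 0"
  shows "\<exists>\<delta>>0. \<forall>t. \<bar>t\<bar> < \<delta> \<longrightarrow> (\<exists>x\<in>E. x + t \<in> E)"
proof -
  define \<mu> where "\<mu> = measure lebesgue E"
  have Elm: "E \<in> lmeasurable" using bounded_set_imp_lmeasurable[OF bE E] .
  obtain T where T: "closed T" "T \<subseteq> E" "E - T \<in> lmeasurable" "emeasure lebesgue (E - T) < ennreal (\<mu>/2)"
    using sets_lebesgue_inner_closed[OF E, of "\<mu>/2"] pos \<mu>_def by auto
  have Tlm: "T \<in> lmeasurable"
  proof (rule bounded_set_imp_lmeasurable)
    show "bounded T" using T(2) bE bounded_subset by blast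
    have "T \<in> sets lborel" using T(1) by simp
    then show "T \<in> sets lebesgue" by (simp add: sets_completionI_sets)
  qed
  have cT: "compact T" using T(1,2) bE bounded_subset compact_eq_bounded_closed by blast
  have "measure lebesgue (E - T) < \<mu>/2"
    using meas_lt_aux[OF T(3,4)] .
  moreover have "measure lebesgue (E - T) = \<mu> - measure lebesgue T"
    unfolding \<mu>_def by (rule measure_Diff) (use Elm Tlm T(2) in \<open>auto simp: fmeasurable_def\<close>)
  ultimately have mT: "measure lebesgue T > \<mu>/2" by simp
  then have mTpos: "measure lebesgue T > 0" using pos \<mu>_def by simp
  obtain U where U: "open U" "T \<subseteq> U" "U - T \<in> lmeasurable" "emeasure lebesgue (U - T) < ennreal (measure lebesgue T)"
    using sets_lebesgue_outer_open[of T "measure lebesgue T"] Tlm mTpos by (auto simp: fmeasurable_def)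
  have Ulm: "U \<in> lmeasurable"
  proof -
    have "U = T \<union> (U - T)" using U(2) by auto
    then show ?thesis using Tlm U(3) by (metis fmeasurable.Un)
  qed
  have mUT: "measure lebesgue (U - T) < measure lebesgue T"
    using meas_lt_aux[OF U(3,4)] .
  have mU: "measure lebesgue U < 2 * measure lebesgue T"
  proof -
    have "measure lebesgue U = measure lebesgue T + measure lebesgue (U - T)"
    proof -
      have "measure lebesgue (U - T) = measure lebesgue U - measure lebesgue T"
        by (rule measure_Diff) (use Ulm Tlm U(2) in \<open>auto simp: fmeasurable_def\<close>)
      then show ?thesis by simp
    qed
    then show ?thesis using mUT by simp
  qed
  obtain \<delta> where d: "\<delta> > 0" "\<forall>x\<in>T. \<forall>y\<in>-U. \<delta> \<le> dist x y"
    using separate_compact_closed[OF cT, of "-U"] U(1,2) by auto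
  show ?thesis
  proof (intro exI[of _ \<delta>] conjI allI impI)
    show "\<delta> > 0" by fact
    fix t :: real assume t: "\<bar>t\<bar> < \<delta>"
    have sub: "(+) t ` T \<subseteq> U"
    proof
      fix z assume "z \<in> (+) t ` T"
      then obtain x where x: "x \<in> T" "z = t + x" by auto
      have "dist x z < \<delta>" using x t by (simp add: dist_real_def)
      then show "z \<in> U" using d(2) x(1) by force
    qed
    have tlm: "(+) t ` T \<in> lmeasurable" using measurable_translation[OF Tlm] .
    have "T \<inter> (+) t ` T \<noteq> {}"
    proof
      assume dis: "T \<inter> (+) t ` T = {}"
      have "measure lebesgue (T \<union> (+) t ` T) = measure lebesgue T + measure lebesgue ((+) t ` T)"
        by (rule measure_Union) (simp_all only: infinity_ennreal_def fmeasurableD2 fmeasurableD Tlm tlm dis not_False_eq_True)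
      also have "\<dots> = 2 * measure lebesgue T" by (simp add: measure_translation)
      finally have "measure lebesgue (T \<union> (+) t ` T) = 2 * measure lebesgue T" .
      moreover have "measure lebesgue (T \<union> (+) t ` T) \<le> measure lebesgue U"
        by (rule measure_mono_fmeasurable[OF _ sets.Un[OF fmeasurableD[OF Tlm] fmeasurableD[OF tlm]] Ulm])
          (use sub U(2) in auto)
      ultimately show False using mU by simp
    qed
    then obtain x where "x \<in> T" "t + x \<in> T" by auto
    then show "\<exists>x\<in>E. x + t \<in> E" using T(2) by (metis add.commute subsetD)
  qed
qed



lemma additive_basic:
  fixes f :: "real \<Rightarrow> real"
  assumes add: "\<And>x y. f (x + y) = f x + f y"
  shows "f 0 = 0" "\<And>x. f (- x) = - f x" "\<And>x n. f (real n * x) = real n * f x"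
    "\<And>k. f (of_int k) = of_int k * f 1"
proof -
  show f0: "f 0 = 0" using add[of 0 0] by simp
  show neg: "\<And>x. f (- x) = - f x"
  proof -
    fix x show "f (- x) = - f x" using add[of x "-x"] f0 by simp
  qed
  show nat: "\<And>x n. f (real n * x) = real n * f x"
  proof -
    fix x n show "f (real n * x) = real n * f x"
      by (induction n) (simp_all add: f0 add distrib_right)
  qed
  fix k :: int
  show "f (of_int k) = of_int k * f 1"
  proof (cases "k \<ge> 0")
    case True
    then show ?thesis using nat[of "nat k" 1] by simp
  next
    case False
    then have e: "real_of_int k = - (real (nat (-k)) * 1)" by simp
    have "f (of_int k) = - f (real (nat (-k)) * 1)" by (subst e) (rule neg)
    also have "\<dots> = - (real (nat (-k)) * f 1)" using nat[of "nat (-k)" 1] by simp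
    also have "\<dots> = of_int k * f 1" using False by simp
    finally show ?thesis .
  qed
qed

lemma additive_bounded_linear:
  fixes f :: "real \<Rightarrow> real"
  assumes add: "\<And>x y. f (x + y) = f x + f y"
    and d: "\<delta> > 0" and bnd: "\<And>t. \<bar>t\<bar> < \<delta> \<Longrightarrow> \<bar>f t\<bar> \<le> B"
  shows "f x = f 1 * x"
proof -
  define u where "u x = f x - f 1 * x" for x
  have uadd: "u (x + y) = u x + u y" for x y unfolding u_def by (simp add: add algebra_simps)
  note ub = additive_basic[of u, OF uadd]
  have u1: "u 1 = 0" unfolding u_def by simp
  have uint: "u (of_int k) = 0" for k using ub(4)[of k] u1 by simp
  define B' where "B' = B + \<bar>f 1\<bar> * \<delta>"
  have ubnd: "\<bar>u t\<bar> \<le> B'" if "\<bar>t\<bar> < \<delta>" for t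
  proof -
    have "\<bar>f 1 * t\<bar> \<le> \<bar>f 1\<bar> * \<delta>" using that by (simp add: abs_mult mult_left_mono)
    then show ?thesis using bnd[OF that] unfolding u_def B'_def by linarith
  qed
  obtain K :: nat where K: "1 / \<delta> < real K" using reals_Archimedean2 by blast
  have "0 < 1 / \<delta>" using d by simp
  then have Kpos: "real K > 0" using K by linarith
  have Kd: "1 < \<delta> * real K" using K d by (simp add: divide_less_eq mult.commute)
  have u01: "\<bar>u y\<bar> \<le> real K * B'" if "0 \<le> y" "y < 1" for y
  proof -
    have "y < \<delta> * real K" using that Kd by linarith
    then have "y / real K < \<delta>" using Kpos by (simp add: divide_less_eq)
    then have "\<bar>y / real K\<bar> < \<delta>" using that Kpos by simp
    then have "\<bar>u (y / real K)\<bar> \<le> B'" by (rule ubnd)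
    moreover have "u y = real K * u (y / real K)" using ub(3)[of K "y / real K"] Kpos by simp
    ultimately show ?thesis using Kpos by (simp add: abs_mult)
  qed
  have "u x = 0"
  proof (rule ccontr)
    assume ne: "u x \<noteq> 0"
    obtain N :: nat where N: "real K * B' / \<bar>u x\<bar> < real N" using reals_Archimedean2 by blast
    have "u (real N * x) = real N * u x" by (rule ub(3))
    moreover have "u (of_int \<lfloor>real N * x\<rfloor> + (real N * x - of_int \<lfloor>real N * x\<rfloor>)) = u (real N * x - of_int \<lfloor>real N * x\<rfloor>)"
      using uadd[of "of_int \<lfloor>real N * x\<rfloor>" "real N * x - of_int \<lfloor>real N * x\<rfloor>"] uint[of "\<lfloor>real N * x\<rfloor>"] by simp
    ultimately have "real N * u x = u (real N * x - of_int \<lfloor>real N * x\<rfloor>)"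
      by simp
    moreover have "\<bar>u (real N * x - of_int \<lfloor>real N * x\<rfloor>)\<bar> \<le> real K * B'"
      by (rule u01) (simp_all add: floor_le_iff, linarith)
    ultimately have "real N * \<bar>u x\<bar> \<le> real K * B'" by (simp add: abs_mult)
    moreover have "real K * B' < real N * \<bar>u x\<bar>" using N ne by (simp add: divide_less_eq)
    ultimately show False by simp
  qed
  then show ?thesis unfolding u_def by simp
qed



lemma closed_in_lebesgue: "closed S \<Longrightarrow> S \<in> sets lebesgue"
  by (metis borel_closed sets_completionI_sets sets_lborel)

lemma measurable_additive_linear:
  fixes f :: "real \<Rightarrow> real"
  assumes meas: "f \<in> borel_measurable lebesgue" and add: "\<And>x y. f (x + y) = f x + f y"
  shows "f x = f 1 * x"
proof -
  define E where "E M = {0..1} \<inter> f -` {- real M..real M}" for M :: nat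
  have Esets: "E M \<in> sets lebesgue" for M
  proof -
    have "f -` {- real M..real M} \<inter> space lebesgue \<in> sets lebesgue"
      by (rule measurable_sets[OF meas]) simp
    then show ?thesis unfolding E_def using closed_in_lebesgue[of "{0..1::real}"]
      by (simp add: sets.Int)
  qed
  have Elm: "E M \<in> lmeasurable" for M
    by (rule bounded_set_imp_lmeasurable[OF _ Esets]) (auto simp: E_def intro: bounded_subset[of "{0..1}"])
  have "\<exists>M. E M \<notin> null_sets lebesgue"
  proof (rule ccontr)
    assume "\<not> ?thesis"
    then have "(\<Union>M. E M) \<in> null_sets lebesgue" by blast
    moreover have "(\<Union>M. E M) = {0..1}"
    proof
      show "(\<Union>M. E M) \<subseteq> {0..1}" by (auto simp: E_def)
      show "{0..1} \<subseteq> (\<Union>M. E M)"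
      proof
        fix x :: real assume x: "x \<in> {0..1}"
        have c: "\<bar>f x\<bar> \<le> real (nat \<lceil>\<bar>f x\<bar>\<rceil>)" by linarith
        have "- real (nat \<lceil>\<bar>f x\<bar>\<rceil>) \<le> f x \<and> f x \<le> real (nat \<lceil>\<bar>f x\<bar>\<rceil>)"
          using c by linarith
        then have "x \<in> E (nat \<lceil>\<bar>f x\<bar>\<rceil>)" using x unfolding E_def by (simp only: Int_iff vimage_eq atLeastAtMost_iff)
        then show "x \<in> (\<Union>M. E M)" by blast
      qed
    qed
    ultimately have "{0..1::real} \<in> null_sets lebesgue" by simp
    then have "emeasure lebesgue {0..1::real} = 0" by auto
    moreover have "emeasure lebesgue {0..1::real} = 1" by simp
    ultimately show False by simp
  qed
  then obtain M where M: "E M \<notin> null_sets lebesgue" by blast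
  have "measure lebesgue (E M) > 0"
  proof -
    have "emeasure lebesgue (E M) \<noteq> 0" using M Esets by auto
    then have "measure lebesgue (E M) \<noteq> 0"
      using Elm[of M] by (metis emeasure_eq_measure2 ennreal_0 fmeasurableD2)
    then show ?thesis using measure_nonneg[of lebesgue "E M"] by linarith
  qed
  moreover have "bounded (E M)" unfolding E_def by (rule bounded_subset[of "{0..1}"]) auto
  ultimately obtain \<delta> where d: "\<delta> > 0" "\<forall>t. \<bar>t\<bar> < \<delta> \<longrightarrow> (\<exists>x\<in>E M. x + t \<in> E M)"
    using steinhaus_real[OF Esets, of M] by blast
  have bnd: "\<bar>f t\<bar> \<le> 2 * real M" if tt: "\<bar>t\<bar> < \<delta>" for t
  proof -
    from d(2) tt obtain x where x: "x \<in> E M" "x + t \<in> E M" by blast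
    have "f t = f (x + t) - f x" using add[of x t] by simp
    then show ?thesis using x unfolding E_def by auto
  qed
  show ?thesis by (rule additive_bounded_linear[OF add d(1) bnd])
qed



lemma open_in_lebesgue: "open S \<Longrightarrow> S \<in> sets lebesgue"
  by (metis borel_open sets_completionI_sets sets_lborel)

lemma ln_differentiable_on_pos: "S \<subseteq> {0<..} \<Longrightarrow> (ln :: real \<Rightarrow> real) differentiable_on S"
  unfolding differentiable_on_def
proof
  fix x :: real assume "S \<subseteq> {0<..}" "x \<in> S"
  then have "x > 0" by auto
  then have "ln differentiable (at x)"
    using DERIV_ln[of x] unfolding has_field_derivative_def by (rule_tac differentiableI) 
  then show "ln differentiable (at x within S)" by (rule differentiable_at_withinI)
qed

lemma mult_cauchy:
  fixes w :: "real \<Rightarrow> real"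
  assumes meas: "w \<in> borel_measurable (lebesgue_on {0<..})"
    and mul: "\<And>x y. x > 0 \<Longrightarrow> y > 0 \<Longrightarrow> w (x * y) = w x + w y"
  shows "\<exists>c. \<forall>x>0. w x = c * ln x"
proof -
  define W where "W x = (if x \<in> {0<..} then w x else 0)" for x :: real
  have Wm: "W \<in> borel_measurable lebesgue"
    unfolding W_def by (rule borel_measurable_if_I[OF meas]) (simp add: open_in_lebesgue)
  define f where "f x = W (exp x)" for x
  have fm: "f \<in> borel_measurable lebesgue"
  proof (rule measurableI)
    fix x show "f x \<in> space borel" by simp
  next
    fix A :: "real set" assume A: "A \<in> sets borel"
    have "W -` A \<inter> space lebesgue \<in> sets lebesgue" by (rule measurable_sets[OF Wm A])
    then have S: "W -` A \<inter> {0<..} \<in> sets lebesgue"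
      using open_in_lebesgue[of "{0::real<..}"] by (simp add: sets.Int)
    have eq: "f -` A \<inter> space lebesgue = ln ` (W -` A \<inter> {0<..})"
    proof (rule set_eqI)
      fix x
      show "x \<in> f -` A \<inter> space lebesgue \<longleftrightarrow> x \<in> ln ` (W -` A \<inter> {0<..})"
      proof
        assume "x \<in> f -` A \<inter> space lebesgue"
        then have "exp x \<in> W -` A \<inter> {0<..}" by (simp add: f_def)
        then show "x \<in> ln ` (W -` A \<inter> {0<..})" by (metis image_eqI ln_exp)
      next
        assume "x \<in> ln ` (W -` A \<inter> {0<..})"
        then obtain y where "y > 0" "W y \<in> A" "x = ln y" by auto
        then show "x \<in> f -` A \<inter> space lebesgue" by (simp add: f_def)
      qed
    qed
    show "f -` A \<inter> space lebesgue \<in> sets lebesgue"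
      unfolding eq by (rule differentiable_image_in_sets_lebesgue[OF S]) (auto intro: ln_differentiable_on_pos)
  qed
  have fadd: "f (x + y) = f x + f y" for x y
    unfolding f_def W_def by (simp add: exp_add mul)
  have lin: "f x = f 1 * x" for x by (rule measurable_additive_linear[OF fm]) (rule fadd)
  show ?thesis
  proof (intro exI allI impI)
    fix x :: real assume "x > 0"
    then have "w x = f (ln x)" by (simp add: f_def W_def)
    then show "w x = f 1 * ln x" using lin[of "ln x"] by (rule trans)
  qed
qed



lemma affine_on_pos:
  fixes k :: "real \<Rightarrow> real"
  assumes aff: "\<And>x y t. x>0 \<Longrightarrow> y>0 \<Longrightarrow> 0<t \<Longrightarrow> t<1 \<Longrightarrow> k (t*x + (1-t)*y) = t * k x + (1-t) * k y"
    and x: "x > 0"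
  shows "k x = k 1 + (k 2 - k 1) * (x - 1)"
proof -
  consider "x = 1" | "x = 2" | "1 < x \<and> x < 2" | "2 < x" | "x < 1" by linarith
  then show ?thesis
  proof cases
    case 1 then show ?thesis by simp
  next
    case 2 then show ?thesis by simp
  next
    case 3
    have e: "(x - 1) * 2 + (1 - (x - 1)) * 1 = x" by simp
    have "k ((x - 1) * 2 + (1 - (x - 1)) * 1) = (x - 1) * k 2 + (1 - (x - 1)) * k 1"
      by (rule aff) (use 3 in auto)
    then show ?thesis unfolding e by (simp add: algebra_simps)
  next
    case 4
    define t where "t = 1 / (x - 1)"
    have t: "0 < t" "t < 1" using 4 by (auto simp: t_def)
    have tx: "(x - 1) * t = 1" using 4 by (simp add: t_def)
    have e: "t * x + (1 - t) * 1 = 2"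
    proof -
      have "t * x + (1 - t) * 1 = (x - 1) * t + 1" by (simp add: algebra_simps)
      then show ?thesis using tx by simp
    qed
    have "k (t * x + (1 - t) * 1) = t * k x + (1 - t) * k 1"
      by (rule aff) (use 4 t in auto)
    then have "k 2 = t * k x + (1 - t) * k 1" unfolding e .
    then have "(x - 1) * k 2 = (x - 1) * (t * k x + (1 - t) * k 1)" by simp
    also have "\<dots> = ((x - 1) * t) * k x + ((x - 1) - (x - 1) * t) * k 1"
      by (simp add: algebra_simps)
    finally have "(x - 1) * k 2 = ((x - 1) * t) * k x + ((x - 1) - (x - 1) * t) * k 1" .
    then have "(x - 1) * k 2 = k x + (x - 2) * k 1" unfolding tx by simp
    then show ?thesis by (simp add: algebra_simps)
  next
    case 5
    define t where "t = 1 / (2 - x)"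
    have t: "0 < t" "t < 1" using 5 x by (auto simp: t_def)
    have tx: "(2 - x) * t = 1" using 5 by (simp add: t_def)
    have e: "t * x + (1 - t) * 2 = 1"
    proof -
      have "t * x + (1 - t) * 2 = 2 - (2 - x) * t" by (simp add: algebra_simps)
      then show ?thesis using tx by simp
    qed
    have "k (t * x + (1 - t) * 2) = t * k x + (1 - t) * k 2"
      by (rule aff) (use 5 x t in auto)
    then have "k 1 = t * k x + (1 - t) * k 2" unfolding e .
    then have "(2 - x) * k 1 = (2 - x) * (t * k x + (1 - t) * k 2)" by simp
    also have "\<dots> = ((2 - x) * t) * k x + ((2 - x) - (2 - x) * t) * k 2"
      by (simp add: algebra_simps)
    finally have "(2 - x) * k 1 = ((2 - x) * t) * k x + ((2 - x) - (2 - x) * t) * k 2" .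
    then have "(2 - x) * k 1 = k x + (1 - x) * k 2" unfolding tx by simp
    then show ?thesis by (simp add: algebra_simps)
  qed
qed

lemma gap_functional_equation:
  fixes b :: "real \<Rightarrow> real"
  assumes meas: "b \<in> borel_measurable (lebesgue_on {0<..})"
    and H: "\<And>x y t \<alpha>. x>0 \<Longrightarrow> y>0 \<Longrightarrow> 0<t \<Longrightarrow> t<1 \<Longrightarrow> \<alpha>>0 \<Longrightarrow>
      b (\<alpha>*(t*x+(1-t)*y)) - t*b (\<alpha>*x) - (1-t)*b (\<alpha>*y) = b (t*x+(1-t)*y) - t*b x - (1-t)*b y"
  shows "\<exists>c \<kappa> d. \<forall>x>0. b x = c * ln x + \<kappa> * x + d"
proof -
  define A where "A \<alpha> = (b (\<alpha>*2) - b 2) - (b (\<alpha>*1) - b 1)" for \<alpha>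
  have scal: "b (\<alpha> * x) = b x + (b \<alpha> - b 1) + A \<alpha> * (x - 1)" if a: "\<alpha> > 0" and x: "x > 0" for \<alpha> x
  proof -
    define k where "k x = b (\<alpha> * x) - b x" for x
    have "k x = k 1 + (k 2 - k 1) * (x - 1)"
    proof (rule affine_on_pos[OF _ x])
      fix x y t :: real assume "x>0" "y>0" "0<t" "t<1"
      then show "k (t*x + (1-t)*y) = t * k x + (1-t) * k y"
        using H[of x y t \<alpha>] a unfolding k_def by (simp add: algebra_simps)
    qed
    then show ?thesis unfolding k_def A_def by (simp add: algebra_simps)
  qed
  define u where "u x = b x - b 1" for x
  have uscal: "u (\<alpha> * x) = u x + u \<alpha> + A \<alpha> * (x - 1)" if "\<alpha> > 0" "x > 0" for \<alpha> x
    using scal[OF that] unfolding u_def by simp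
  define \<kappa> where "\<kappa> = A 2"
  have Alin: "A \<alpha> = \<kappa> * (\<alpha> - 1)" if "\<alpha> > 0" for \<alpha>
  proof -
    have "u (\<alpha> * 2) = u 2 + u \<alpha> + A \<alpha> * (2 - 1)" using uscal[of \<alpha> 2] that by simp
    moreover have "u (2 * \<alpha>) = u \<alpha> + u 2 + A 2 * (\<alpha> - 1)" using uscal[of 2 \<alpha>] that by simp
    ultimately show ?thesis unfolding \<kappa>_def by (simp add: mult.commute)
  qed
  define w where "w x = u x - \<kappa> * (x - 1)" for x
  have wmul: "w (x * y) = w x + w y" if "x > 0" "y > 0" for x y
  proof -
    have "u (x * y) = u y + u x + \<kappa> * (x - 1) * (y - 1)" using uscal[of x y] Alin[of x] that by simp
    then show ?thesis unfolding w_def by (simp add: algebra_simps)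
  qed
  have wmeas: "w \<in> borel_measurable (lebesgue_on {0<..})"
  proof -
    have "(\<lambda>x::real. x) \<in> borel_measurable (lebesgue_on {0<..})"
      by (rule continuous_imp_measurable_on_sets_lebesgue) (auto intro: continuous_intros open_in_lebesgue)
    then show ?thesis unfolding w_def u_def using meas by measurable
  qed
  obtain c where c: "\<forall>x>0. w x = c * ln x" using mult_cauchy[OF wmeas wmul] by blast
  show ?thesis
  proof (intro exI allI impI)
    fix x :: real assume "x > 0"
    then have "w x = c * ln x" using c by simp
    then show "b x = c * ln x + \<kappa> * x + (b 1 - \<kappa>)" unfolding w_def u_def by (simp add: algebra_simps)
  qed
qed



lemma cylinder_null:
  fixes N :: "real set" and k :: "'n::finite"
  assumes N: "N \<in> null_sets lborel"
  shows "{R::real^'n. R $ k \<in> N} \<in> null_sets lborel"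
proof -
  define f where "f b x = (if b = axis k (1::real) then indicator N x else (1::ennreal))" for b :: "real^'n" and x :: real
  have Nb: "N \<in> sets borel" using null_setsD2[OF N] by simp
  have "(\<integral>\<^sup>+x. (\<Prod>b\<in>Basis. f b (x \<bullet> b)) \<partial>lborel) = (\<Prod>b\<in>Basis. (\<integral>\<^sup>+x. f b x \<partial>lborel))"
    by (rule nn_integral_lborel_prod) (use Nb in \<open>auto simp: f_def\<close>)
  also have "\<dots> = 0"
  proof (rule prod_zero)
    show "finite (Basis :: (real^'n) set)" by simp
    have "axis k (1::real) \<in> (Basis :: (real^'n) set)" by simp
    moreover have "(\<integral>\<^sup>+x. f (axis k 1) x \<partial>lborel) = 0"
      using nn_integral_indicator[OF null_setsD2[OF N]] null_setsD1[OF N] by (simp add: f_def)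
    ultimately show "\<exists>b\<in>Basis. (\<integral>\<^sup>+x. f b x \<partial>lborel) = 0" by blast
  qed
  finally have I: "(\<integral>\<^sup>+x. (\<Prod>b\<in>Basis. f b (x \<bullet> b)) \<partial>lborel) = 0" .
  have eqf: "(\<Prod>b\<in>Basis. f b (x \<bullet> b)) = indicator {R::real^'n. R $ k \<in> N} x" for x :: "real^'n"
  proof -
    have "(\<Prod>b\<in>Basis. f b (x \<bullet> b)) = f (axis k 1) (x \<bullet> axis k 1) * (\<Prod>b\<in>Basis - {axis k 1}. f b (x \<bullet> b))"
      by (rule prod.remove) simp_all
    also have "(\<Prod>b\<in>Basis - {axis k 1}. f b (x \<bullet> b)) = 1"
      by (rule prod.neutral) (simp add: f_def)
    finally show ?thesis by (simp add: f_def inner_axis indicator_def)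
  qed
  have Sb: "{R::real^'n. R $ k \<in> N} \<in> sets borel"
  proof -
    have "(\<lambda>R::real^'n. R $ k) \<in> borel_measurable borel" by (intro borel_measurable_continuous_onI continuous_intros)
    then have "(\<lambda>R::real^'n. R $ k) -` N \<inter> space borel \<in> sets borel" using Nb by (rule measurable_sets)
    then show ?thesis by (simp add: vimage_def)
  qed
  have "emeasure lborel {R::real^'n. R $ k \<in> N} = 0"
    using I Sb by (simp add: eqf nn_integral_indicator)
  then show ?thesis using Sb by (simp add: null_sets_def)
qed

lemma comp_component_measurable:
  fixes h :: "real \<Rightarrow> real" and k :: "'n::finite"
  assumes h: "h \<in> borel_measurable lebesgue"
  shows "(\<lambda>R::real^'n. h (R $ k)) \<in> borel_measurable lebesgue"
proof -
  obtain h' where h': "h' \<in> borel_measurable lborel" and ae: "AE x in lborel. h x = h' x"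
    using completion_ex_borel_measurable_real[OF h] by blast
  from ae obtain N where N: "{x \<in> space lborel. \<not> h x = h' x} \<subseteq> N" "emeasure lborel N = 0" "N \<in> sets lborel"
    by (rule AE_E)
  have Nn: "N \<in> null_sets lborel" using N by (simp add: null_sets_def)
  have m1: "(\<lambda>R::real^'n. h' (R $ k)) \<in> borel_measurable lebesgue"
  proof -
    have "(\<lambda>R::real^'n. R $ k) \<in> borel_measurable borel" by (intro borel_measurable_continuous_onI continuous_intros)
    moreover have "h' \<in> borel_measurable borel" using h' by simp
    ultimately have "(\<lambda>R::real^'n. h' (R $ k)) \<in> borel_measurable borel"
      using measurable_comp[of "\<lambda>R::real^'n. R $ k" borel borel h' borel] by (simp add: o_def)
    then have "(\<lambda>R::real^'n. h' (R $ k)) \<in> borel_measurable lborel" by simp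
    then show ?thesis by (rule measurable_completion)
  qed
  have "AE R in lebesgue. h' ((R::real^'n) $ k) = h (R $ k)"
  proof (rule AE_I')
    show "{R::real^'n. R $ k \<in> N} \<in> null_sets lebesgue"
      using cylinder_null[OF Nn, of k] by (rule null_sets_completionI)
    show "{R \<in> space lebesgue. \<not> h' ((R::real^'n) $ k) = h (R $ k)} \<subseteq> {R. R $ k \<in> N}"
      using N(1) by auto
  qed
  then show ?thesis by (rule borel_measurable_AE[OF m1])
qed



lemma simplex_nonneg: "p \<in> prob_simplex \<Longrightarrow> 0 \<le> p $ i"
  by (simp add: prob_simplex_def)

lemma sum_supp_eq:
  fixes p :: "real^'n"
  assumes "p \<in> prob_simplex"
  shows "(\<Sum>i\<in>supp_vec p. p $ i * h i) = (\<Sum>i\<in>UNIV. p $ i * h i)"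
proof (rule sum.mono_neutral_left)
  show "\<forall>i\<in>UNIV - supp_vec p. p $ i * h i = 0"
  proof
    fix i assume "i \<in> UNIV - supp_vec p"
    then have "p $ i = 0" using simplex_nonneg[OF assms, of i] by (simp add: supp_vec_def)
    then show "p $ i * h i = 0" by simp
  qed
qed auto

lemma supp_sum_one:
  fixes p :: "real^'n"
  assumes "p \<in> prob_simplex"
  shows "(\<Sum>i\<in>supp_vec p. p $ i) = 1"
  using sum_supp_eq[OF assms, of "\<lambda>_. 1"] assms by (simp add: prob_simplex_def)

lemma supp_ne:
  fixes p :: "real^'n"
  assumes "p \<in> prob_simplex"
  shows "supp_vec p \<noteq> {}"
  using supp_sum_one[OF assms] by auto

lemma inner_sum_vec: "(p::real^'n) \<bullet> R = (\<Sum>i\<in>UNIV. p $ i * R $ i)"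
  by (simp add: inner_vec_def)

lemma Dn_D:
  fixes p R :: "real^'n"
  assumes "(p, R) \<in> Dn"
  shows "p \<in> prob_simplex" "\<And>i. 0 \<le> R $ i" "\<And>i. i \<in> supp_vec p \<Longrightarrow> 0 < R $ i"
    "\<And>i. i \<in> supp_vec p \<Longrightarrow> 0 < p $ i"
  using assms by (auto simp: Dn_def supp_vec_def)

lemma Dn_inner:
  fixes p R :: "real^'n"
  assumes "(p, R) \<in> Dn"
  shows "(\<Sum>i\<in>supp_vec p. p $ i * R $ i) = p \<bullet> R" "p \<bullet> R > 0"
proof -
  show eq: "(\<Sum>i\<in>supp_vec p. p $ i * R $ i) = p \<bullet> R"
    using sum_supp_eq[OF Dn_D(1)[OF assms]] by (simp add: inner_sum_vec)
  have "0 < (\<Sum>i\<in>supp_vec p. p $ i * R $ i)"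
    by (rule sum_pos) (use supp_ne[OF Dn_D(1)[OF assms]] Dn_D(3,4)[OF assms] in auto)
  then show "p \<bullet> R > 0" using eq by simp
qed

lemma Dn_Rset:
  fixes p R :: "real^'n"
  assumes "(p, R) \<in> Dn"
  shows "R \<in> Rset"
proof -
  obtain k where k: "k \<in> supp_vec p" using supp_ne[OF Dn_D(1)[OF assms]] by blast
  have "R $ k > 0" using Dn_D(3)[OF assms k] .
  then have "R \<noteq> 0" by auto
  then show ?thesis using Dn_D(2)[OF assms] by (simp add: Rset_def)
qed

lemma axis_simplex: "axis k (1::real) \<in> prob_simplex"
  by (auto simp: prob_simplex_def axis_def)

lemma supp_axis: "supp_vec (axis k (1::real)) = {k}"
  by (auto simp: supp_vec_def axis_def)

lemma axis_Dn:
  fixes R :: "real^'n"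
  assumes "\<And>i. 0 \<le> R $ i" "0 < R $ k"
  shows "(axis k 1, R) \<in> Dn"
  using assms by (simp add: Dn_def axis_simplex supp_axis) (simp add: supp_vec_def)

lemma axis_inner: "axis k (1::real) \<bullet> (R::real^'n) = R $ k"
  by (simp add: inner_axis')

lemma D2_D4_gap:
  fixes g :: "real ^ 'n \<Rightarrow> real ^ 'n \<Rightarrow> real"
  assumes D2: "D2 g"
    and H: "\<forall>m>0. \<forall>R\<in>Rset. \<forall>p\<in>Cset m R. g p R = a R \<bullet> p + b m"
  shows "is_gap_function g b"
  unfolding is_gap_function_def
proof (clarify)
  fix p R :: "real^'n" assume pR: "(p, R) \<in> Dn"
  have R: "R \<in> Rset" by (rule Dn_Rset[OF pR])
  have m: "p \<bullet> R > 0" by (rule Dn_inner(2)[OF pR])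
  have pC: "p \<in> Cset (p \<bullet> R) R" using pR by (simp add: Cset_def Dcond_def)
  have g: "g p R = a R \<bullet> p + b (p \<bullet> R)" using H m R pC by blast
  have ak: "a R $ k = - b (R $ k)" if k: "k \<in> supp_vec p" for k
  proof -
    have Rk: "R $ k > 0" using Dn_D(3)[OF pR k] .
    have eD: "(axis k 1, R) \<in> Dn" by (rule axis_Dn[OF Dn_D(2)[OF pR] Rk])
    have "axis k 1 \<in> Cset (R $ k) R" using eD by (simp add: Cset_def Dcond_def axis_inner)
    then have "g (axis k 1) R = a R \<bullet> axis k 1 + b (R $ k)" using H Rk R by blast
    moreover have "g (axis k 1) R = 0" using D2 eD unfolding D2_def by (auto simp: supp_axis)
    ultimately show ?thesis by (simp add: inner_axis)
  qed
  have "a R \<bullet> p = (\<Sum>i\<in>UNIV. p $ i * a R $ i)" by (simp add: inner_sum_vec mult.commute)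
  also have "\<dots> = (\<Sum>i\<in>supp_vec p. p $ i * a R $ i)" using sum_supp_eq[OF Dn_D(1)[OF pR]] by simp
  also have "\<dots> = - (\<Sum>i\<in>supp_vec p. p $ i * b (R $ i))"
    by (simp add: ak sum_negf[symmetric])
  finally have "a R \<bullet> p = - (\<Sum>i\<in>supp_vec p. p $ i * b (R $ i))" .
  then show "g p R = b (\<Sum>i\<in>supp_vec p. p $ i * R $ i) - (\<Sum>i\<in>supp_vec p. p $ i * b (R $ i))"
    using g Dn_inner(1)[OF pR] by simp
qed

definition pos_ext :: "(real \<Rightarrow> real) \<Rightarrow> real \<Rightarrow> real" where
  "pos_ext \<phi> x = (if x \<in> {0<..} then \<phi> x else 0)"

lemma gap_UNIV:
  fixes g :: "real ^ 'n \<Rightarrow> real ^ 'n \<Rightarrow> real"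
  assumes gap: "is_gap_function g \<phi>" and pR: "(p, R) \<in> Dn"
  shows "g p R = \<phi> (p \<bullet> R) - (\<Sum>i\<in>UNIV. p $ i * pos_ext \<phi> (R $ i))"
proof -
  have "g p R = \<phi> (\<Sum>i\<in>supp_vec p. p $ i * R $ i) - (\<Sum>i\<in>supp_vec p. p $ i * \<phi> (R $ i))"
    using gap pR unfolding is_gap_function_def by auto
  also have "(\<Sum>i\<in>supp_vec p. p $ i * \<phi> (R $ i)) = (\<Sum>i\<in>supp_vec p. p $ i * pos_ext \<phi> (R $ i))"
    by (rule sum.cong) (use Dn_D(3)[OF pR] in \<open>auto simp: pos_ext_def\<close>)
  also have "\<dots> = (\<Sum>i\<in>UNIV. p $ i * pos_ext \<phi> (R $ i))" by (rule sum_supp_eq[OF Dn_D(1)[OF pR]])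
  finally show ?thesis using Dn_inner(1)[OF pR] by simp
qed

lemma gap_D2:
  fixes g :: "real ^ 'n \<Rightarrow> real ^ 'n \<Rightarrow> real"
  assumes gap: "is_gap_function g \<phi>"
  shows "D2 g"
  unfolding D2_def
proof (clarify)
  fix p R :: "real^'n" assume pR: "(p, R) \<in> Dn"
    and c: "\<forall>i\<in>supp_vec p. \<forall>j\<in>supp_vec p. R $ i = R $ j"
  obtain k where k: "k \<in> supp_vec p" using supp_ne[OF Dn_D(1)[OF pR]] by blast
  have ck: "R $ i = R $ k" if "i \<in> supp_vec p" for i using c k that by blast
  have "(\<Sum>i\<in>supp_vec p. p $ i * R $ i) = (\<Sum>i\<in>supp_vec p. p $ i * R $ k)"
    by (rule sum.cong) (simp_all add: ck)
  also have "\<dots> = R $ k" using supp_sum_one[OF Dn_D(1)[OF pR]] by (simp add: sum_distrib_right[symmetric])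
  finally have s1: "(\<Sum>i\<in>supp_vec p. p $ i * R $ i) = R $ k" .
  have "(\<Sum>i\<in>supp_vec p. p $ i * \<phi> (R $ i)) = (\<Sum>i\<in>supp_vec p. p $ i * \<phi> (R $ k))"
    by (rule sum.cong) (simp_all add: ck)
  also have "\<dots> = \<phi> (R $ k)" using supp_sum_one[OF Dn_D(1)[OF pR]] by (simp add: sum_distrib_right[symmetric])
  finally have s2: "(\<Sum>i\<in>supp_vec p. p $ i * \<phi> (R $ i)) = \<phi> (R $ k)" .
  have "g p R = \<phi> (\<Sum>i\<in>supp_vec p. p $ i * R $ i) - (\<Sum>i\<in>supp_vec p. p $ i * \<phi> (R $ i))"
    using gap pR unfolding is_gap_function_def by blast
  then show "g p R = 0" using s1 s2 by simp
qed

lemma gap_D4: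
  fixes g :: "real ^ 'n \<Rightarrow> real ^ 'n \<Rightarrow> real"
  assumes meas: "\<phi> \<in> borel_measurable (lebesgue_on {0<..})" and gap: "is_gap_function g \<phi>"
  shows "D4 g"
  unfolding D4_def
proof (intro exI conjI)
  define a where "a R = (\<chi> i. - pos_ext \<phi> ((R::real^'n) $ i))" for R
  have pm: "pos_ext \<phi> \<in> borel_measurable lebesgue"
    unfolding pos_ext_def[abs_def] by (rule borel_measurable_if_I[OF meas]) (simp add: open_in_lebesgue)
  have am: "a \<in> borel_measurable lebesgue"
  proof (subst borel_measurable_euclidean_space, intro ballI)
    fix b :: "real^'n" assume "b \<in> Basis"
    then obtain i where b: "b = axis i 1" by (auto simp: Basis_vec_def)
    have "(\<lambda>R::real^'n. - pos_ext \<phi> (R $ i)) \<in> borel_measurable lebesgue"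
      using comp_component_measurable[OF pm, of i] by (rule borel_measurable_uminus)
    then show "(\<lambda>x. a x \<bullet> b) \<in> borel_measurable lebesgue" by (simp add: b a_def inner_axis)
  qed
  then show "a \<in> borel_measurable (lebesgue_on Rset)" by (rule measurable_restrict_space1)
  show "\<phi> \<in> borel_measurable (lebesgue_on {0<..})" by (rule meas)
  show "\<forall>m>0. \<forall>R\<in>(Rset::(real^'n) set). \<forall>p\<in>Cset m R. g p R = a R \<bullet> p + \<phi> m"
  proof (intro allI impI ballI)
    fix m and R p :: "real^'n" assume "0 < m" "R \<in> Rset" "p \<in> Cset m R"
    then have pR: "(p, R) \<in> Dn" and m: "p \<bullet> R = m" by (auto simp: Cset_def Dcond_def)
    have "a R \<bullet> p = - (\<Sum>i\<in>UNIV. p $ i * pos_ext \<phi> (R $ i))"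
      by (simp add: a_def inner_sum_vec sum_negf[symmetric] mult.commute)
    then show "g p R = a R \<bullet> p + \<phi> m" using gap_UNIV[OF gap pR] m by simp
  qed
qed



definition tp :: "'n \<Rightarrow> 'n \<Rightarrow> real \<Rightarrow> real \<Rightarrow> real^'n" where
  "tp i j x y = (\<chi> k. if k = i then x else if k = j then y else 0)"

lemma tp_nth: "i \<noteq> j \<Longrightarrow> tp i j x y $ i = x" "i \<noteq> j \<Longrightarrow> tp i j x y $ j = y"
  "k \<noteq> i \<Longrightarrow> k \<noteq> j \<Longrightarrow> tp i j x y $ k = 0"
  by (auto simp: tp_def)

lemma tp_nonneg: "0 \<le> x \<Longrightarrow> 0 \<le> y \<Longrightarrow> 0 \<le> tp i j x y $ k"
  by (auto simp: tp_def)

lemma tp_supp: "i \<noteq> j \<Longrightarrow> 0 < x \<Longrightarrow> 0 < y \<Longrightarrow> supp_vec (tp i j x y) = {i, j}"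
  by (auto simp: supp_vec_def tp_def)

lemma tp_sum:
  assumes "i \<noteq> j"
  shows "(\<Sum>k\<in>UNIV. tp i j x y $ k) = x + y"
proof -
  have "(\<Sum>k\<in>UNIV. tp i j x y $ k) = (\<Sum>k\<in>{i, j}. tp i j x y $ k)"
    by (rule sum.mono_neutral_right) (auto simp: tp_def)
  then show ?thesis using assms by (simp add: tp_nth)
qed

lemma tp_Dn:
  assumes ij: "i \<noteq> j" and t: "0 < t" "t < 1" and xy: "0 < x" "0 < y"
  shows "(tp i j t (1 - t), tp i j x y) \<in> Dn"
proof -
  have "tp i j t (1 - t) \<in> prob_simplex"
    unfolding prob_simplex_def using t tp_sum[OF ij, of t "1 - t"] by (auto simp: tp_def)
  then show ?thesis unfolding Dn_def using t xy ij
    by (simp add: tp_supp tp_nonneg)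
qed

lemma tp_scale: "\<alpha> *\<^sub>R tp i j x y = tp i j (\<alpha> * x) (\<alpha> * y)"
  by (vector tp_def)

lemma gap_two:
  fixes g :: "real ^ 'n \<Rightarrow> real ^ 'n \<Rightarrow> real"
  assumes gap: "is_gap_function g \<phi>"
    and ij: "i \<noteq> j" and t: "0 < t" "t < 1" and xy: "0 < x" "0 < y"
  shows "g (tp i j t (1 - t)) (tp i j x y) = \<phi> (t * x + (1 - t) * y) - t * \<phi> x - (1 - t) * \<phi> y"
proof -
  have pR: "(tp i j t (1 - t), tp i j x y) \<in> Dn" by (rule tp_Dn[OF ij t xy])
  have s: "supp_vec (tp i j t (1 - t)) = {i, j}" using tp_supp[OF ij, of t "1 - t"] t by simp
  have "g (tp i j t (1 - t)) (tp i j x y) =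
     \<phi> (\<Sum>k\<in>supp_vec (tp i j t (1 - t)). tp i j t (1 - t) $ k * tp i j x y $ k)
     - (\<Sum>k\<in>supp_vec (tp i j t (1 - t)). tp i j t (1 - t) $ k * \<phi> (tp i j x y $ k))"
    using gap pR unfolding is_gap_function_def by blast
  then show ?thesis unfolding s using ij by (simp add: tp_nth)
qed

lemma two_indices:
  assumes "CARD('n) \<ge> 2"
  obtains i j :: "'n::finite" where "i \<noteq> j"
proof -
  have "\<not> (\<forall>a\<in>(UNIV::'n set). \<forall>b\<in>UNIV. a = b)"
    using assms card_le_Suc0_iff_eq[of "UNIV::'n set"] by auto
  then show ?thesis using that by blast
qed

lemma Dcond_convex:
  fixes R :: "real^'n"
  shows "convex (Dcond R)"
  unfolding convex_def
proof (intro ballI allI impI)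
  fix p q :: "real^'n" and u v :: real
  assume p: "p \<in> Dcond R" and q: "q \<in> Dcond R" and u: "0 \<le> u" and v: "0 \<le> v" and uv: "u + v = 1"
  have pD: "(p, R) \<in> Dn" and qD: "(q, R) \<in> Dn" using p q by (auto simp: Dcond_def)
  note ps = Dn_D(1)[OF pD] and qs = Dn_D(1)[OF qD]
  define r where "r = u *\<^sub>R p + v *\<^sub>R q"
  have rnn: "0 \<le> r $ k" for k
    using simplex_nonneg[OF ps, of k] simplex_nonneg[OF qs, of k] u v by (simp add: r_def)
  have rle: "r $ k \<le> 1" for k
  proof -
    have "p $ k \<le> 1" "q $ k \<le> 1" using ps qs by (auto simp: prob_simplex_def)
    then have "u * p $ k \<le> u" "v * q $ k \<le> v" using u v by (simp_all add: mult_left_le)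
    then show ?thesis using uv by (simp add: r_def)
  qed
  have rsum: "(\<Sum>k\<in>UNIV. r $ k) = 1"
  proof -
    have "(\<Sum>k\<in>UNIV. r $ k) = u * (\<Sum>k\<in>UNIV. p $ k) + v * (\<Sum>k\<in>UNIV. q $ k)"
      by (simp add: r_def sum.distrib sum_distrib_left)
    then show ?thesis using ps qs uv by (simp add: prob_simplex_def)
  qed
  have rsupp: "supp_vec r \<subseteq> supp_vec R"
  proof
    fix k assume "k \<in> supp_vec r"
    then have "0 < u * p $ k + v * q $ k" by (simp add: supp_vec_def r_def)
    then have "0 < p $ k \<or> 0 < q $ k"
    proof (rule contrapos_pp)
      assume "\<not> (0 < p $ k \<or> 0 < q $ k)"
      then have "p $ k = 0" "q $ k = 0"
        using simplex_nonneg[OF ps, of k] simplex_nonneg[OF qs, of k] by auto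
      then show "\<not> 0 < u * p $ k + v * q $ k" by simp
    qed
    then show "k \<in> supp_vec R" using Dn_D(3)[OF pD] Dn_D(3)[OF qD] by (auto simp: supp_vec_def)
  qed
  have "r \<in> prob_simplex" unfolding prob_simplex_def using rnn rle rsum by blast
  then have "(r, R) \<in> Dn" unfolding Dn_def using rsupp Dn_D(2)[OF pD] by blast
  then show "u *\<^sub>R p + v *\<^sub>R q \<in> Dcond R" unfolding r_def Dcond_def by blast
qed

lemma gap_concave_D1:
  fixes g :: "real ^ 'n \<Rightarrow> real ^ 'n \<Rightarrow> real"
  assumes gap: "is_gap_function g \<phi>" and conc: "concave_on {0<..} \<phi>"
  shows "D1 g"
  unfolding D1_def
proof
  fix R :: "real^'n" assume "R \<in> Rset"
  show "concave_on (Dcond R) (\<lambda>p. g p R)"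
    unfolding concave_on_def convex_on_def
  proof (intro conjI Dcond_convex ballI allI impI)
    fix p q :: "real^'n" and u v :: real
    assume p: "p \<in> Dcond R" and q: "q \<in> Dcond R" and u: "0 \<le> u" and v: "0 \<le> v" and uv: "u + v = 1"
    have pD: "(p, R) \<in> Dn" and qD: "(q, R) \<in> Dn" using p q by (auto simp: Dcond_def)
    have rD: "(u *\<^sub>R p + v *\<^sub>R q, R) \<in> Dn"
      using Dcond_convex[of R] p q u v uv unfolding convex_def Dcond_def by blast
    define L where "L s = (\<Sum>i\<in>UNIV. s $ i * pos_ext \<phi> (R $ i))" for s :: "real^'n"
    have Llin: "L (u *\<^sub>R p + v *\<^sub>R q) = u * L p + v * L q"
      by (simp add: L_def sum.distrib sum_distrib_left algebra_simps)
    have inn: "(u *\<^sub>R p + v *\<^sub>R q) \<bullet> R = u * (p \<bullet> R) + v * (q \<bullet> R)"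
      by (simp add: inner_add_left)
    have c: "- \<phi> (u * (p \<bullet> R) + v * (q \<bullet> R)) \<le> u * - \<phi> (p \<bullet> R) + v * - \<phi> (q \<bullet> R)"
      using conc Dn_inner(2)[OF pD] Dn_inner(2)[OF qD] u v uv
      unfolding concave_on_def convex_on_def by auto
    have gp: "g p R = \<phi> (p \<bullet> R) - L p" using gap_UNIV[OF gap pD] unfolding L_def .
    have gq: "g q R = \<phi> (q \<bullet> R) - L q" using gap_UNIV[OF gap qD] unfolding L_def .
    have gr: "g (u *\<^sub>R p + v *\<^sub>R q) R = \<phi> (u * (p \<bullet> R) + v * (q \<bullet> R)) - (u * L p + v * L q)"
      using gap_UNIV[OF gap rD] unfolding L_def[symmetric] Llin inn .
    have e1: "u * - (\<phi> (p \<bullet> R) - L p) = u * - \<phi> (p \<bullet> R) + u * L p" by (simp add: algebra_simps)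
    have e2: "v * - (\<phi> (q \<bullet> R) - L q) = v * - \<phi> (q \<bullet> R) + v * L q" by (simp add: algebra_simps)
    show "- g (u *\<^sub>R p + v *\<^sub>R q) R \<le> u * - g p R + v * - g q R"
      unfolding gp gq gr e1 e2 using c by linarith
  qed
qed

lemma D1_concave:
  fixes g :: "real ^ 'n \<Rightarrow> real ^ 'n \<Rightarrow> real"
  assumes gap: "is_gap_function g \<phi>" and D1: "D1 g" and n2: "CARD('n) \<ge> 2"
  shows "concave_on {0<..} \<phi>"
  unfolding concave_on_def convex_on_def
proof (intro conjI ballI allI impI)
  show "convex {0::real<..}" by simp
  obtain i j :: 'n where ij: "i \<noteq> j" using two_indices[OF n2] by blast
  fix x y u v :: real
  assume x: "x \<in> {0<..}" and y: "y \<in> {0<..}" and u: "0 \<le> u" and v: "0 \<le> v" and uv: "u + v = 1"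
  show "- \<phi> (u *\<^sub>R x + v *\<^sub>R y) \<le> u * - \<phi> x + v * - \<phi> y"
  proof (cases "u = 0 \<or> v = 0")
    case True
    then show ?thesis using uv by auto
  next
    case False
    then have u1: "0 < u" "u < 1" using u v uv by auto
    have xy: "0 < x" "0 < y" using x y by auto
    define R where "R = tp i j x y"
    have Rnn: "\<And>k. 0 \<le> R $ k" using xy by (simp add: R_def tp_nonneg)
    have RR: "R \<in> Rset" using Dn_Rset[OF tp_Dn[OF ij u1 xy]] by (simp add: R_def)
    have ei: "axis i 1 \<in> Dcond R" using axis_Dn[OF Rnn, of i] xy ij by (simp add: Dcond_def R_def tp_nth)
    have ej: "axis j 1 \<in> Dcond R" using axis_Dn[OF Rnn, of j] xy ij by (simp add: Dcond_def R_def tp_nth)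
    have D2: "D2 g" by (rule gap_D2[OF gap])
    have gi: "g (axis i 1) R = 0" using D2 ei unfolding D2_def Dcond_def by (auto simp: supp_axis)
    have gj: "g (axis j 1) R = 0" using D2 ej unfolding D2_def Dcond_def by (auto simp: supp_axis)
    have cc: "concave_on (Dcond R) (\<lambda>p. g p R)" using D1 RR unfolding D1_def by blast
    have "- g (u *\<^sub>R axis i 1 + v *\<^sub>R axis j 1) R \<le> u * - g (axis i 1) R + v * - g (axis j 1) R"
      using cc ei ej u v uv unfolding concave_on_def convex_on_def by blast
    moreover have "u *\<^sub>R axis i 1 + v *\<^sub>R axis j 1 = tp i j u (1 - u)"
      unfolding vec_eq_iff using uv ij by (auto simp: tp_def axis_def)
    ultimately have "- g (tp i j u (1 - u)) R \<le> 0" using gi gj by simp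
    then have "0 \<le> \<phi> (u * x + (1 - u) * y) - u * \<phi> x - (1 - u) * \<phi> y"
      using gap_two[OF gap ij u1 xy] by (simp add: R_def)
    then have "- \<phi> (u * x + (1 - u) * y) \<le> - (u * \<phi> x) + - ((1 - u) * \<phi> y)" by linarith
    moreover have "v = 1 - u" using uv by simp
    ultimately show ?thesis by (simp only: real_scaleR_def mult_minus_right)
  qed
qed



lemma cln_measurable: "(\<lambda>x::real. c * ln x) \<in> borel_measurable (lebesgue_on {0<..})"
proof -
  have "(\<lambda>x::real. c * ln x) \<in> borel_measurable borel" by measurable
  then have "(\<lambda>x::real. c * ln x) \<in> borel_measurable lborel" by simp
  then have "(\<lambda>x::real. c * ln x) \<in> borel_measurable lebesgue" by (rule measurable_completion)
  then show ?thesis by (rule measurable_restrict_space1)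
qed

lemma Gamma_gap:
  fixes g :: "real ^ 'n \<Rightarrow> real ^ 'n \<Rightarrow> real"
  assumes "\<forall>(p, R) \<in> Dn. g p R = c * Gamma p R"
  shows "is_gap_function g (\<lambda>x. c * ln x)"
  unfolding is_gap_function_def
proof (clarify)
  fix p R :: "real^'n" assume pR: "(p, R) \<in> Dn"
  have "g p R = c * Gamma p R" using assms pR by blast
  then show "g p R = c * ln (\<Sum>i\<in>supp_vec p. p $ i * R $ i) - (\<Sum>i\<in>supp_vec p. p $ i * (c * ln (R $ i)))"
    by (simp add: Gamma_def right_diff_distrib sum_distrib_left mult.left_commute)
qed

lemma Gamma_D3:
  fixes g :: "real ^ 'n \<Rightarrow> real ^ 'n \<Rightarrow> real"
  assumes G: "\<forall>(p, R) \<in> Dn. g p R = c * Gamma p R"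
  shows "D3 g"
  unfolding D3_def
proof (clarify)
  fix p R :: "real^'n" and \<alpha> :: real assume pR: "(p, R) \<in> Dn" and a: "\<alpha> > 0"
  have pR': "(p, \<alpha> *\<^sub>R R) \<in> Dn"
    using pR a by (auto simp: Dn_def supp_vec_def zero_less_mult_iff)
  note ps = Dn_D(1)[OF pR]
  have m: "(\<Sum>i\<in>supp_vec p. p $ i * R $ i) > 0" using Dn_inner[OF pR] by simp
  have s1: "(\<Sum>i\<in>supp_vec p. p $ i * (\<alpha> *\<^sub>R R) $ i) = \<alpha> * (\<Sum>i\<in>supp_vec p. p $ i * R $ i)"
    by (simp add: sum_distrib_left mult.left_commute)
  have s2: "(\<Sum>i\<in>supp_vec p. p $ i * ln ((\<alpha> *\<^sub>R R) $ i)) = ln \<alpha> + (\<Sum>i\<in>supp_vec p. p $ i * ln (R $ i))"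
  proof -
    have "(\<Sum>i\<in>supp_vec p. p $ i * ln ((\<alpha> *\<^sub>R R) $ i)) = (\<Sum>i\<in>supp_vec p. p $ i * ln \<alpha> + p $ i * ln (R $ i))"
    proof (rule sum.cong[OF refl])
      fix i assume "i \<in> supp_vec p"
      then have "R $ i > 0" by (rule Dn_D(3)[OF pR])
      then show "p $ i * ln ((\<alpha> *\<^sub>R R) $ i) = p $ i * ln \<alpha> + p $ i * ln (R $ i)"
        using a by (simp add: ln_mult distrib_left)
    qed
    also have "\<dots> = ln \<alpha> * (\<Sum>i\<in>supp_vec p. p $ i) + (\<Sum>i\<in>supp_vec p. p $ i * ln (R $ i))"
      by (simp add: sum.distrib sum_distrib_left mult.commute)
    finally show ?thesis using supp_sum_one[OF ps] by simp
  qed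
  have "Gamma p (\<alpha> *\<^sub>R R) = Gamma p R"
    unfolding Gamma_def s1 s2 using a m by (simp add: ln_mult)
  moreover have "g p (\<alpha> *\<^sub>R R) = c * Gamma p (\<alpha> *\<^sub>R R)" using G pR' by blast
  moreover have "g p R = c * Gamma p R" using G pR by blast
  ultimately show "g p (\<alpha> *\<^sub>R R) = g p R" by simp
qed

lemma concave_cln: "concave_on {0<..} (\<lambda>x. c * ln x) \<longleftrightarrow> c \<ge> 0"
proof
  assume "c \<ge> 0"
  have "convex_on {0<..} (\<lambda>x. - ln x)" using ln_concave unfolding concave_on_def .
  then have "convex_on {0<..} (\<lambda>x. c * - ln x)" using \<open>c \<ge> 0\<close> by (rule convex_on_cmul[rotated])
  then show "concave_on {0<..} (\<lambda>x. c * ln x)" unfolding concave_on_def by simp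
next
  assume cc: "concave_on {0<..} (\<lambda>x. c * ln x)"
  have cc': "\<forall>x\<in>{0<..}. \<forall>y\<in>{0<..}. \<forall>u\<ge>0. \<forall>v\<ge>0. u + v = 1 \<longrightarrow>
      - (c * ln (u *\<^sub>R x + v *\<^sub>R y)) \<le> u * - (c * ln x) + v * - (c * ln (y::real))"
    using cc unfolding concave_on_def convex_on_def by blast
  have "- (c * ln ((1/2) *\<^sub>R 1 + (1/2) *\<^sub>R 4)) \<le> (1/2) * - (c * ln 1) + (1/2) * - (c * ln (4::real))"
    using cc'[rule_format, of 1 4 "1/2" "1/2"] by simp
  moreover have "ln (4::real) = 2 * ln 2"
    using ln_mult[of "2::real" 2] by simp
  moreover have "(1/2) *\<^sub>R 1 + (1/2) *\<^sub>R 4 = (5/2::real)" by simp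
  ultimately have le: "c * ln 2 \<le> c * ln (5/2)" by simp
  have lt: "ln (2::real) < ln (5/2)" by simp
  show "c \<ge> 0"
  proof (rule ccontr)
    assume "\<not> c \<ge> 0"
    then have "c < 0" by simp
    then have "c * ln (5/2) < c * ln 2" using lt by (simp add: mult_less_cancel_left)
    then show False using le by simp
  qed
qed



lemma D234_Gamma:
  fixes g :: "real ^ 'n \<Rightarrow> real ^ 'n \<Rightarrow> real"
  assumes n2: "CARD('n) \<ge> 2" and D2: "D2 g" and D3: "D3 g" and D4: "D4 g"
  shows "\<exists>c::real. \<forall>(p, R) \<in> Dn. g p R = c * Gamma p R"
proof -
  from D4 obtain a :: "real^'n \<Rightarrow> real^'n" and b :: "real \<Rightarrow> real"
    where bm: "b \<in> borel_measurable (lebesgue_on {0<..})"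
      and H: "\<forall>m>0. \<forall>R\<in>Rset. \<forall>p\<in>Cset m R. g p R = a R \<bullet> p + b m"
    unfolding D4_def by blast
  have gap: "is_gap_function g b" by (rule D2_D4_gap[OF D2 H])
  obtain i j :: 'n where ij: "i \<noteq> j" using two_indices[OF n2] by blast
  have FE: "b (\<alpha>*(t*x+(1-t)*y)) - t*b (\<alpha>*x) - (1-t)*b (\<alpha>*y) = b (t*x+(1-t)*y) - t*b x - (1-t)*b y"
    if xy: "x>0" "y>0" and t: "0<t" "t<1" and a: "\<alpha>>0" for x y t \<alpha>
  proof -
    have pR: "(tp i j t (1 - t), tp i j x y) \<in> Dn" by (rule tp_Dn[OF ij t xy])
    have "g (tp i j t (1 - t)) (\<alpha> *\<^sub>R tp i j x y) = g (tp i j t (1 - t)) (tp i j x y)"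
      using D3 pR a unfolding D3_def by blast
    then have "g (tp i j t (1 - t)) (tp i j (\<alpha> * x) (\<alpha> * y)) = g (tp i j t (1 - t)) (tp i j x y)"
      by (simp add: tp_scale)
    moreover have "g (tp i j t (1 - t)) (tp i j (\<alpha> * x) (\<alpha> * y)) =
        b (t * (\<alpha> * x) + (1 - t) * (\<alpha> * y)) - t * b (\<alpha> * x) - (1 - t) * b (\<alpha> * y)"
      by (rule gap_two[OF gap ij t]) (use xy a in simp_all)
    moreover have "g (tp i j t (1 - t)) (tp i j x y) = b (t * x + (1 - t) * y) - t * b x - (1 - t) * b y"
      by (rule gap_two[OF gap ij t xy])
    moreover have "\<alpha>*(t*x+(1-t)*y) = t * (\<alpha> * x) + (1 - t) * (\<alpha> * y)" by (simp add: algebra_simps)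
    ultimately show ?thesis by simp
  qed
  obtain c \<kappa> d where bf: "\<forall>x>0. b x = c * ln x + \<kappa> * x + d"
    using gap_functional_equation[OF bm FE] by blast
  show ?thesis
  proof (intro exI ballI, clarify)
    fix p R :: "real^'n" assume pR: "(p, R) \<in> Dn"
    define m where "m = (\<Sum>i\<in>supp_vec p. p $ i * R $ i)"
    have m0: "m > 0" using Dn_inner[OF pR] by (simp add: m_def)
    have g: "g p R = b m - (\<Sum>i\<in>supp_vec p. p $ i * b (R $ i))"
      using gap pR unfolding is_gap_function_def m_def by blast
    have "(\<Sum>i\<in>supp_vec p. p $ i * b (R $ i)) =
          (\<Sum>i\<in>supp_vec p. c * (p $ i * ln (R $ i)) + \<kappa> * (p $ i * R $ i) + d * p $ i)"
    proof (rule sum.cong[OF refl])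
      fix k assume "k \<in> supp_vec p"
      then have "R $ k > 0" by (rule Dn_D(3)[OF pR])
      then show "p $ k * b (R $ k) = c * (p $ k * ln (R $ k)) + \<kappa> * (p $ k * R $ k) + d * p $ k"
        using bf by (simp add: algebra_simps)
    qed
    also have "\<dots> = c * (\<Sum>i\<in>supp_vec p. p $ i * ln (R $ i)) + \<kappa> * m + d * (\<Sum>i\<in>supp_vec p. p $ i)"
      by (simp add: sum.distrib sum_distrib_left m_def)
    also have "\<dots> = c * (\<Sum>i\<in>supp_vec p. p $ i * ln (R $ i)) + \<kappa> * m + d"
      using supp_sum_one[OF Dn_D(1)[OF pR]] by simp
    finally have s: "(\<Sum>i\<in>supp_vec p. p $ i * b (R $ i)) = c * (\<Sum>i\<in>supp_vec p. p $ i * ln (R $ i)) + \<kappa> * m + d" .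
    have "b m = c * ln m + \<kappa> * m + d" using bf m0 by simp
    then have "g p R = c * (ln m - (\<Sum>i\<in>supp_vec p. p $ i * ln (R $ i)))"
      using g s by (simp add: algebra_simps)
    then show "g p R = c * Gamma p R" by (simp add: Gamma_def m_def)
  qed
qed

theorem mainTheorem11:
  fixes g :: "real ^ 'n \<Rightarrow> real ^ 'n \<Rightarrow> real"
  assumes n2: "CARD('n) \<ge> 2"
    and meas: "(\<lambda>(p, R). g p R) \<in> borel_measurable (lebesgue_on (Dn :: ((real ^ 'n) \<times> (real ^ 'n)) set))"
  shows "((\<exists>\<phi>. \<phi> \<in> borel_measurable (lebesgue_on {0<..}) \<and> is_gap_function g \<phi>) \<longleftrightarrow> D2 g \<and> D4 g)
       \<and> (\<forall>\<phi>. \<phi> \<in> borel_measurable (lebesgue_on {0<..}) \<and> is_gap_function g \<phi> \<longrightarrow>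
             (concave_on {0<..} \<phi> \<longleftrightarrow> D1 g))
       \<and> ((D2 g \<and> D3 g \<and> D4 g) \<longleftrightarrow> (\<exists>c::real. \<forall>(p, R) \<in> Dn. g p R = c * Gamma p R))
       \<and> (\<forall>c::real. (\<forall>(p, R) \<in> Dn. g p R = c * Gamma p R) \<longrightarrow> (c \<ge> 0 \<longleftrightarrow> D1 g))"
proof (intro conjI allI impI)
  show "(\<exists>\<phi>. \<phi> \<in> borel_measurable (lebesgue_on {0<..}) \<and> is_gap_function g \<phi>) \<longleftrightarrow> D2 g \<and> D4 g"
  proof
    assume "\<exists>\<phi>. \<phi> \<in> borel_measurable (lebesgue_on {0<..}) \<and> is_gap_function g \<phi>"
    then obtain \<phi> where "\<phi> \<in> borel_measurable (lebesgue_on {0<..})" "is_gap_function g \<phi>" by blast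
    then show "D2 g \<and> D4 g" using gap_D2 gap_D4 by blast
  next
    assume "D2 g \<and> D4 g"
    then have D2: "D2 g" and D4: "D4 g" by auto
    from D4 obtain a :: "real^'n \<Rightarrow> real^'n" and b :: "real \<Rightarrow> real"
      where bm: "b \<in> borel_measurable (lebesgue_on {0<..})"
        and H: "\<forall>m>0. \<forall>R\<in>Rset. \<forall>p\<in>Cset m R. g p R = a R \<bullet> p + b m"
      unfolding D4_def by blast
    show "\<exists>\<phi>. \<phi> \<in> borel_measurable (lebesgue_on {0<..}) \<and> is_gap_function g \<phi>"
      using bm D2_D4_gap[OF D2 H] by blast
  qed
next
  fix \<phi> :: "real \<Rightarrow> real"
  assume "\<phi> \<in> borel_measurable (lebesgue_on {0<..}) \<and> is_gap_function g \<phi>"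
  then have gap: "is_gap_function g \<phi>" by blast
  show "concave_on {0<..} \<phi> \<longleftrightarrow> D1 g"
    using gap_concave_D1[OF gap] D1_concave[OF gap _ n2] by blast
next
  show "(D2 g \<and> D3 g \<and> D4 g) \<longleftrightarrow> (\<exists>c::real. \<forall>(p, R) \<in> Dn. g p R = c * Gamma p R)"
  proof
    assume "D2 g \<and> D3 g \<and> D4 g"
    then show "\<exists>c::real. \<forall>(p, R) \<in> Dn. g p R = c * Gamma p R" using D234_Gamma[OF n2] by blast
  next
    assume "\<exists>c::real. \<forall>(p, R) \<in> Dn. g p R = c * Gamma p R"
    then obtain c where G: "\<forall>(p, R) \<in> Dn. g p R = c * Gamma p R" by blast
    have gap: "is_gap_function g (\<lambda>x. c * ln x)" by (rule Gamma_gap[OF G])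
    show "D2 g \<and> D3 g \<and> D4 g"
      using gap_D2[OF gap] gap_D4[OF cln_measurable gap] Gamma_D3[OF G] by blast
  qed
next
  fix c :: real
  assume G: "\<forall>(p, R) \<in> Dn. g p R = c * Gamma p R"
  have gap: "is_gap_function g (\<lambda>x. c * ln x)" by (rule Gamma_gap[OF G])
  have "concave_on {0<..} (\<lambda>x. c * ln x) \<longleftrightarrow> D1 g"
    using gap_concave_D1[OF gap] D1_concave[OF gap _ n2] by blast
  then show "c \<ge> 0 \<longleftrightarrow> D1 g" using concave_cln by blast
qed


end
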